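(* Let $f:\mathbb{F}_2^n\to\mathbb{F}_2^n$ be a nonsingular linear transformation and let $M$ be its matrix with respect to the standard basis. Then $f$ is closed neighbor balanced if and only if every row of $M$ contains exactly $(n+1)/2$ entries equal to $1$.
   Context: $Q_n$ is the hypercube on $\mathbb{F}_2^n$ (adjacency iff differing in exactly one coordinate); the closed neighborhood of $\boldsymbol{u}$ is $N[\boldsymbol{u}]=\{\boldsymbol{u}\}\cup\{\boldsymbol{u}+\boldsymbol{e}_j: j=1,\dots,n\}$, where $\boldsymbol{e}_j$ are the standard basis vectors. A subset $A\subseteq\mathbb{F}_2^n$ is balanced if for every coordinate $i$, the number of $\boldsymbol{a}\in A$ with $a_i=1$ equals $|A|/2$. A bijection $f:\mathbb{F}_2^n\to\mathbb{F}_2^n$ is closed neighbor balanced if $f(N[\boldsymbol{u}])$ is balanced for every $\boldsymbol{u}\in\mathbb{F}_2^n$. *)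

theory Defs
  imports "HOL-Analysis.Analysis" "HOL-Library.Z2"
begin

definition closed_nbhd :: "bit ^ 'n \<Rightarrow> (bit ^ 'n) set" where
  "closed_nbhd u = {u} \<union> {u + axis j 1 | j. True}"

definition balanced :: "(bit ^ 'n) set \<Rightarrow> bool" where
  "balanced A \<longleftrightarrow> (\<forall>i. 2 * card {a \<in> A. a $ i = 1} = card A)"

definition closed_neighbor_balanced :: "(bit ^ 'n \<Rightarrow> bit ^ 'n) \<Rightarrow> bool" where
  "closed_neighbor_balanced f \<longleftrightarrow> bij f \<and> (\<forall>u. balanced (f ` closed_nbhd u))"

end

theory Submission
  imports Defs
begin

lemma bit_add1: "(b::bit) + 1 = 1 \<longleftrightarrow> b = 0" by (cases "b=0") auto

lemma arith_help: "2 * r = n + 1 \<Longrightarrow> r \<le> (n::nat) \<Longrightarrow> 2 * (1 + (n - r)) = n + 1"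
  by arith

lemma nbhd_count:
  fixes f :: "bit ^ 'n \<Rightarrow> bit ^ 'n"
  assumes lin: "Vector_Spaces.linear (*s) (*s) f" and inj: "inj f"
  shows "card (f ` closed_nbhd u) = CARD('n) + 1"
    and "card {a \<in> f ` closed_nbhd u. a $ i = 1} =
         (if f u $ i = 1 then 1 + (CARD('n) - card {j. matrix f $ i $ j = 1})
          else card {j. matrix f $ i $ j = 1})"
proof -
  define g where "g j = f u + f (axis j 1)" for j :: 'n
  have img: "f ` closed_nbhd u = insert (f u) (range g)"
  proof -
    have "closed_nbhd u = insert u (range (\<lambda>j. u + axis j 1))"
      by (auto simp: closed_nbhd_def)
    then show ?thesis by (simp add: image_image g_def vec.linear_add[OF lin])
  qed
  have ginj: "inj g"
  proof (rule injI)
    fix x y assume "g x = g y"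
    then have "f (axis x 1) = f (axis y 1)" unfolding g_def by simp
    then have "axis x (1::bit) = axis y 1" using inj by (simp add: inj_eq)
    then show "x = y" by (simp add: axis_eq_axis)
  qed
  have notin: "f u \<notin> range g"
  proof
    assume "f u \<in> range g"
    then obtain j where "f u = f u + f (axis j 1)" unfolding g_def by auto
    then have "f (axis j 1) = f 0" using vec.linear_0[OF lin] by simp
    then have "axis j (1::bit) = 0" using inj by (simp add: inj_eq)
    then show False by (simp add: axis_eq_0_iff)
  qed
  show "card (f ` closed_nbhd u) = CARD('n) + 1"
    using img notin ginj by (simp add: card_image)
  have gi: "g j $ i = f u $ i + matrix f $ i $ j" for j
    by (simp add: g_def matrix_def)
  have sub: "{a \<in> range g. a $ i = 1} = g ` {j. g j $ i = 1}" by auto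
  have csub: "card {a \<in> range g. a $ i = 1} = card {j. g j $ i = 1}"
    unfolding sub by (rule card_image) (use ginj in \<open>auto intro: inj_on_subset\<close>)
  show "card {a \<in> f ` closed_nbhd u. a $ i = 1} =
         (if f u $ i = 1 then 1 + (CARD('n) - card {j. matrix f $ i $ j = 1})
          else card {j. matrix f $ i $ j = 1})"
  proof (cases "f u $ i = 1")
    case True
    have e1: "{a \<in> f ` closed_nbhd u. a $ i = 1} = insert (f u) {a \<in> range g. a $ i = 1}"
      using True img by auto
    have e2: "{j. g j $ i = 1} = UNIV - {j. matrix f $ i $ j = 1}"
      using True by (auto simp: gi add.commute bit_add1)
    have "card {j. g j $ i = 1} = CARD('n) - card {j. matrix f $ i $ j = 1}"
      unfolding e2 by (simp add: card_Diff_subset)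
    then show ?thesis using True notin csub unfolding e1 by simp
  next
    case False
    then have F0: "f u $ i = 0" by simp
    have e1: "{a \<in> f ` closed_nbhd u. a $ i = 1} = {a \<in> range g. a $ i = 1}"
      using False img by auto
    have e2: "{j. g j $ i = 1} = {j. matrix f $ i $ j = 1}"
      using F0 by (auto simp: gi)
    show ?thesis using False csub e2 unfolding e1 by simp
  qed
qed

theorem lemma3p6:
  fixes f :: "bit ^ 'n \<Rightarrow> bit ^ 'n"
  assumes "Vector_Spaces.linear (*s) (*s) f"
    and "bij f"
  shows "closed_neighbor_balanced f \<longleftrightarrow>
           (\<forall>i. 2 * card {j. matrix f $ i $ j = 1} = CARD('n) + 1)"
proof -
  have inj: "inj f" using assms(2) bij_is_inj by blast
  note C1 = nbhd_count(1)[OF assms(1) inj]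
  note C = nbhd_count(2)[OF assms(1) inj]
  have rle: "card {j. matrix f $ i $ j = 1} \<le> CARD('n)" for i
    by (rule card_mono) auto
  show ?thesis
  proof
    assume "closed_neighbor_balanced f"
    then have "balanced (f ` closed_nbhd 0)" unfolding closed_neighbor_balanced_def by blast
    then show "\<forall>i. 2 * card {j. matrix f $ i $ j = 1} = CARD('n) + 1"
      unfolding balanced_def using C[of 0] C1 vec.linear_0[OF assms(1)] by simp
  next
    assume R: "\<forall>i. 2 * card {j. matrix f $ i $ j = 1} = CARD('n) + 1"
    have "balanced (f ` closed_nbhd u)" for u
      unfolding balanced_def
    proof
      fix i
      show "2 * card {a \<in> f ` closed_nbhd u. a $ i = 1} = card (f ` closed_nbhd u)"
        proof (cases "f u $ i = 1")
        case True
        have "2 * (1 + (CARD('n) - card {j. matrix f $ i $ j = 1})) = CARD('n) + 1"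
          using spec[OF R, of i] rle[of i] arith_help by blast
        then show ?thesis using C[of u i] C1[of u] True by simp
      next
        case False
        then show ?thesis using C[of u i] C1[of u] spec[OF R, of i] by simp
      qed
    qed
    then show "closed_neighbor_balanced f"
      unfolding closed_neighbor_balanced_def using assms(2) by blast
  qed
qed

end
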